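(* Let $M$ be a group and let $\Gamma$ be a normal subgroup of $M$ of finite index with $\Gamma \cong \mathbb{Z}$. Then there exists a characteristic subgroup $\Theta$ of $M$ (i.e. one mapped to itself by every automorphism of $M$) such that $\Theta \cong \mathbb{Z}$ and $\Theta \subset \Gamma$. *)

theory Defs
  imports "HOL-Algebra.Algebra"
begin

definition characteristic_subgroup :: "'a set \<Rightarrow> ('a, 'b) monoid_scheme \<Rightarrow> bool" where
  "characteristic_subgroup H M \<longleftrightarrow>
     subgroup H M \<and> (\<forall>\<phi> \<in> iso M M. \<phi> ` H = H)"

end

theory Submission
  imports Defs
begin

lemma int_subgroup_cyclic:
  fixes K :: "int set"
  assumes z: "0 \<in> K" and ad: "\<And>x y. x\<in>K \<Longrightarrow> y\<in>K \<Longrightarrow> x+y \<in> K"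
    and ng: "\<And>x. x\<in>K \<Longrightarrow> -x\<in>K" and a: "a \<in> K" "a \<noteq> 0"
  shows "\<exists>d>0. K = range (\<lambda>k. k*d)"
proof -
  define P where "P = (\<lambda>m::nat. int m \<in> K \<and> m > 0)"
  have "P (nat \<bar>a\<bar>)" using a ng unfolding P_def by (cases "a \<ge> 0") auto
  then have Pm: "P (LEAST m. P m)" by (rule LeastI)
  define d where "d = int (LEAST m. P m)"
  have dK: "d \<in> K" and dpos: "d > 0" using Pm unfolding P_def d_def by auto
  have dmin: "d \<le> e" if "e \<in> K" "e > 0" for e
  proof -
    have "P (nat e)" using that unfolding P_def by auto
    then have "(LEAST m. P m) \<le> nat e" by (rule Least_le)
    then show ?thesis using that unfolding d_def by auto
  qed
  have mn: "int m * d \<in> K" for m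
    by (induction m) (auto simp: z distrib_right intro: ad dK)
  have mk: "k * d \<in> K" for k
  proof (cases "k \<ge> 0")
    case True then show ?thesis using mn[of "nat k"] by simp
  next
    case False then show ?thesis using ng[OF mn[of "nat (-k)"]] by simp
  qed
  have "x \<in> range (\<lambda>k. k*d)" if x: "x \<in> K" for x
  proof -
    have "x mod d = x + - ((x div d) * d)" by (simp add: minus_div_mult_eq_mod[symmetric])
    then have "x mod d \<in> K" using ad[OF x ng[OF mk]] by simp
    moreover have "0 \<le> x mod d" "x mod d < d" using dpos by auto
    ultimately have "x mod d = 0" using dmin by force
    then have "x = (x div d) * d" using div_mult_mod_eq[of x d] by simp
    then show ?thesis by (metis rangeI)
  qed
  then show ?thesis using dpos mk by blast
qed

lemma sub_iso:
  assumes gM: "group M" and sG: "subgroup G M"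
    and h: "h \<in> iso (M\<lparr>carrier := G\<rparr>) integer_group"
    and sH: "subgroup H M" and HG: "H \<subseteq> G" and a: "a \<in> H" "h a \<noteq> 0"
  shows "M\<lparr>carrier := H\<rparr> \<cong> integer_group"
proof -
  interpret M: group M by (rule gM)
  have hm: "h (x \<otimes>\<^bsub>M\<^esub> y) = h x + h y" if "x \<in> G" "y \<in> G" for x y
    using h that unfolding iso_def hom_def by simp
  have hinj: "inj_on h G" using h unfolding iso_def bij_betw_def by simp
  have hsurj: "h ` G = UNIV" using h unfolding iso_def bij_betw_def by simp
  have oneG: "\<one>\<^bsub>M\<^esub> \<in> G" by (rule subgroup.one_closed[OF sG])
  have h1: "h \<one>\<^bsub>M\<^esub> = 0" using hm[OF oneG oneG] by simp
  have hinv: "h (inv\<^bsub>M\<^esub> x) = - h x" if "x \<in> G" for x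
  proof -
    have "inv\<^bsub>M\<^esub> x \<in> G" using subgroup.m_inv_closed[OF sG that] .
    moreover have "x \<in> carrier M" using sG that subgroup.subset by blast
    ultimately show ?thesis using hm[OF that, of "inv\<^bsub>M\<^esub> x"] h1 by simp
  qed
  define K where "K = h ` H"
  have "\<exists>d>0. K = range (\<lambda>k. k*d)"
  proof (rule int_subgroup_cyclic)
    show "0 \<in> K" unfolding K_def using h1 subgroup.one_closed[OF sH] by (metis image_eqI)
    show "x + y \<in> K" if xyK: "x \<in> K" "y \<in> K" for x y
    proof -
      obtain u v where "u \<in> H" "v \<in> H" "x = h u" "y = h v" using xyK unfolding K_def by blast
      
      then have "u \<otimes>\<^bsub>M\<^esub> v \<in> H" "h (u \<otimes>\<^bsub>M\<^esub> v) = x + y" using hm[of u v] HG subgroup.m_closed[OF sH] by auto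
      then show ?thesis unfolding K_def by (metis image_eqI)
    qed
    show "- x \<in> K" if xK: "x \<in> K" for x
    proof -
      obtain u where "u \<in> H" "x = h u" using xK unfolding K_def by blast
      
      then have "inv\<^bsub>M\<^esub> u \<in> H" "h (inv\<^bsub>M\<^esub> u) = - x" using hinv[of u] HG subgroup.m_inv_closed[OF sH] by auto
      then show ?thesis unfolding K_def by (metis image_eqI)
    qed
    show "h a \<in> K" unfolding K_def using a by simp
    show "h a \<noteq> 0" by (rule a)
  qed
  then obtain d where d: "d > 0" "K = range (\<lambda>k. k*d)" by blast
  have hd: "h x = (h x div d) * d" if "x \<in> H" for x
  proof -
    have "h x \<in> K" using that K_def by simp
    then obtain k where "h x = k * d" using d by auto
    then show ?thesis using d by simp
  qed
  define f where "f = (\<lambda>x. h x div d)"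
  have "f \<in> iso (M\<lparr>carrier := H\<rparr>) integer_group"
    unfolding iso_iff
  proof (intro conjI)
    show "f \<in> hom (M\<lparr>carrier := H\<rparr>) integer_group"
    proof (rule homI)
      fix x y assume "x \<in> carrier (M\<lparr>carrier := H\<rparr>)" "y \<in> carrier (M\<lparr>carrier := H\<rparr>)"
      then have xy: "x \<in> H" "y \<in> H" by auto
      have "h (x \<otimes>\<^bsub>M\<^esub> y) = h x + h y" using hm[of x y] xy HG by auto
      also have "\<dots> = (f x + f y) * d" using hd[OF xy(1)] hd[OF xy(2)] unfolding f_def by (simp add: distrib_right)
      finally have "h (x \<otimes>\<^bsub>M\<^esub> y) = (f x + f y) * d" .
      then show "f (x \<otimes>\<^bsub>M\<lparr>carrier := H\<rparr>\<^esub> y) = f x \<otimes>\<^bsub>integer_group\<^esub> f y"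
        unfolding f_def using d by simp
    qed simp
    show "f ` carrier (M\<lparr>carrier := H\<rparr>) = carrier integer_group"
    proof -
      have "k \<in> f ` H" for k
      proof -
        have "k * d \<in> K" using d by auto
        then obtain x where x: "x \<in> H" "h x = k * d" unfolding K_def by auto
        then have "f x = k" unfolding f_def using d by simp
        then show ?thesis using x(1) by (metis image_eqI)
      qed
      then show ?thesis by (simp add: set_eq_iff)
    qed
    show "inj_on f (carrier (M\<lparr>carrier := H\<rparr>))"
    proof (rule inj_onI)
      fix x y assume "x \<in> carrier (M\<lparr>carrier := H\<rparr>)" "y \<in> carrier (M\<lparr>carrier := H\<rparr>)" "f x = f y"
      then have xy: "x \<in> H" "y \<in> H" "h x div d = h y div d" unfolding f_def by auto
      then have "h x = h y" using hd[OF xy(1)] hd[OF xy(2)] by simp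
      note xy = xy(1,2) this
      then show "x = y" using hinj HG xy by (meson inj_onD subsetD)
    qed
  qed
  then show ?thesis by (rule is_isoI)
qed

theorem proposition3p6:
  fixes M (structure) and \<Gamma> :: "'a set"
  assumes "group M"
    and "\<Gamma> \<lhd> M"
    and "finite (rcosets \<Gamma>)"
    and "M\<lparr>carrier := \<Gamma>\<rparr> \<cong> integer_group"
  shows "\<exists>\<Theta>. characteristic_subgroup \<Theta> M \<and> M\<lparr>carrier := \<Theta>\<rparr> \<cong> integer_group \<and> \<Theta> \<subseteq> \<Gamma>"
proof -
  interpret M: group M by (rule assms(1))
  interpret N: normal \<Gamma> M by (rule assms(2))
  have sG: "subgroup \<Gamma> M" using assms(2) by (rule normal_imp_subgroup)
  have GC: "\<Gamma> \<subseteq> carrier M" using sG subgroup.subset by blast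
  obtain h where h: "h \<in> iso (M\<lparr>carrier := \<Gamma>\<rparr>) integer_group"
    using assms(4) unfolding is_iso_def by blast
  define n where "n = card (rcosets \<Gamma>)"
  have "\<Gamma> #> \<one> \<in> rcosets \<Gamma>" unfolding RCOSETS_def by auto
  then have "\<Gamma> \<in> rcosets \<Gamma>" using GC by simp
  then have npos: "n > 0" unfolding n_def using assms(3) card_gt_0_iff by blast
  have powG: "g [^] n \<in> \<Gamma>" if g: "g \<in> carrier M" for g
  proof -
    have gF: "group (M Mod \<Gamma>)" by (rule N.factorgroup_is_group)
    have ord: "order (M Mod \<Gamma>) = n" unfolding order_def n_def FactGroup_def by simp
    have gc: "\<Gamma> #> g \<in> carrier (M Mod \<Gamma>)" unfolding FactGroup_def RCOSETS_def using g by auto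
    have "(\<Gamma> #> g) [^]\<^bsub>M Mod \<Gamma>\<^esub> n = \<Gamma>"
      using group.pow_order_eq_1[OF gF gc] ord by simp
    moreover have "\<Gamma> #> (g [^] n) = (\<Gamma> #> g) [^]\<^bsub>M Mod \<Gamma>\<^esub> n"
      using hom_nat_pow[OF N.r_coset_hom_Mod g assms(1) gF] .
    ultimately have "\<Gamma> #> (g [^] n) = \<Gamma>" by simp
    then show ?thesis using M.coset_join1[OF _ _ sG] g by simp
  qed
  define S where "S = {g [^] n | g. g \<in> carrier M}"
  have SC: "S \<subseteq> carrier M" unfolding S_def by auto
  have SG: "S \<subseteq> \<Gamma>" unfolding S_def using powG by auto
  define \<Theta> where "\<Theta> = generate M S"
  have sT: "subgroup \<Theta> M" unfolding \<Theta>_def using M.generate_is_subgroup[OF SC] .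
  have TG: "\<Theta> \<subseteq> \<Gamma>" unfolding \<Theta>_def using M.generate_subgroup_incl[OF SG sG] .
  have char: "characteristic_subgroup \<Theta> M"
    unfolding characteristic_subgroup_def
  proof (intro conjI ballI sT)
    fix \<phi> assume phi: "\<phi> \<in> iso M M"
    then have phom: "\<phi> \<in> hom M M" and psurj: "\<phi> ` carrier M = carrier M"
      unfolding iso_iff by auto
    interpret P: group_hom M M \<phi> using phom assms(1) unfolding group_hom_def group_hom_axioms_def by simp
    have "\<phi> ` S = S"
    proof
      show "\<phi> ` S \<subseteq> S"
      proof
        fix y assume "y \<in> \<phi> ` S"
        then obtain g where g: "g \<in> carrier M" "y = \<phi> (g [^] n)" unfolding S_def by auto
        then have "y = \<phi> g [^] n" using P.hom_nat_pow by simp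
        moreover have "\<phi> g \<in> carrier M" using g psurj by auto
        ultimately show "y \<in> S" unfolding S_def by auto
      qed
      show "S \<subseteq> \<phi> ` S"
      proof
        fix y assume "y \<in> S"
        then obtain g where g: "g \<in> carrier M" "y = g [^] n" unfolding S_def by auto
        then obtain g' where g': "g' \<in> carrier M" "g = \<phi> g'" using psurj by (metis imageE)
        then have "y = \<phi> (g' [^] n)" using g P.hom_nat_pow by simp
        moreover have "g' [^] n \<in> S" using g' unfolding S_def by auto
        ultimately show "y \<in> \<phi> ` S" by simp
      qed
    qed
    then show "\<phi> ` \<Theta> = \<Theta>" unfolding \<Theta>_def using P.generate_img[OF SC] by simp
  qed
  have "h ` \<Gamma> = UNIV" using h unfolding iso_def bij_betw_def by auto
  then have "(1::int) \<in> h ` \<Gamma>" by simp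
  then obtain \<gamma> where \<gamma>0: "(1::int) = h \<gamma>" "\<gamma> \<in> \<Gamma>" by (rule imageE)
  then have \<gamma>: "\<gamma> \<in> \<Gamma>" "h \<gamma> = 1" by auto
  have hh: "h \<in> hom (M\<lparr>carrier := \<Gamma>\<rparr>) integer_group" using h unfolding iso_def by blast
  have hm: "h (x \<otimes> y) = h x + h y" if xy: "x \<in> \<Gamma>" "y \<in> \<Gamma>" for x y
  proof -
    have "h (x \<otimes>\<^bsub>M\<lparr>carrier := \<Gamma>\<rparr>\<^esub> y) = h x \<otimes>\<^bsub>integer_group\<^esub> h y"
      by (rule hom_mult[OF hh]) (use xy in auto)
    then show ?thesis by simp
  qed
  have hpow: "\<gamma> [^] m \<in> \<Gamma> \<and> h (\<gamma> [^] m) = int m" for m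
  proof (induction m)
    case 0
    have o: "\<one> \<in> \<Gamma>" using sG subgroup.one_closed by blast
    moreover have "h \<one> = 0" using hm[OF o o] by simp
    ultimately show ?case by simp
  next
    case (Suc m)
    then show ?case using hm[of "\<gamma> [^] m" \<gamma>] \<gamma> subgroup.m_closed[OF sG] by auto
  qed
  have "\<gamma> [^] n \<in> S" unfolding S_def using \<gamma> GC by blast
  then have "\<gamma> [^] n \<in> \<Theta>" unfolding \<Theta>_def by (rule generate.incl)
  moreover have "h (\<gamma> [^] n) \<noteq> 0" using hpow[of n] npos by simp
  ultimately have "M\<lparr>carrier := \<Theta>\<rparr> \<cong> integer_group"
    using sub_iso[OF assms(1) sG h sT TG] by blast
  then show ?thesis using char TG by blast
qed

end
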